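(* For every $C>0$ there exist $c>0$ and $d_0$ such that the following holds for all $d\ge d_0$ and $\kappa\ge1$. Let $\pi^*=\mathcal N(0,I_d)$, let $\pi_0$ be $\pi^*$ conditioned on the set $\{x:\|x\|_2^2\le d/2\}$, and consider the MALA chain targeting $\pi^*$ with step size $0<h\le C\frac{\log d}{\kappa d}$, started from $x_0\sim\pi_0$. Then for every $T\le c\,\kappa d/\log^2 d$, the law $\pi_T$ of the $T$-th iterate satisfies $\|\pi_T-\pi^*\|_{\mathrm{TV}}>1/e$.
   Context: MALA targeting $\pi\propto e^{-f}$ with step size $h>0$: from $x$, propose $y=x-h\nabla f(x)+\sqrt{2h}\,g$, $g\sim\mathcal N(0,I_d)$; move to $y$ with probability $\min\{1,\exp(f(x)-f(y)+\frac{1}{4h}(\|y-x+h\nabla f(x)\|_2^2-\|x-y+h\nabla f(y)\|_2^2))\}$, else stay. Here $f(x)=\frac12\|x\|_2^2$. $\|\mu-\nu\|_{\mathrm{TV}}=\sup_A|\mu(A)-\nu(A)|$. *)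

theory Defs
  imports "HOL-Probability.Probability"
begin

text \<open>Vectors in R^d are represented as functions nat => real, extensional on {..<d}
  (the carrier of the finite product measure PiM {..<d}).\<close>

definition state_space :: "nat \<Rightarrow> (nat \<Rightarrow> real) measure" where
  "state_space d = PiM {..<d} (\<lambda>_. lborel)"

definition sqnorm :: "nat \<Rightarrow> (nat \<Rightarrow> real) \<Rightarrow> real" where
  "sqnorm d x = (\<Sum>i<d. (x i)\<^sup>2)"

definition gauss :: "nat \<Rightarrow> (nat \<Rightarrow> real) measure" where
  "gauss d = PiM {..<d} (\<lambda>_. density lborel std_normal_density)"

definition f_pot :: "nat \<Rightarrow> (nat \<Rightarrow> real) \<Rightarrow> real" where
  "f_pot d x = sqnorm d x / 2"

text \<open>MALA acceptance probability for f(x)=|x|^2/2 (grad f(x) = x).\<close>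
definition mala_accept :: "nat \<Rightarrow> real \<Rightarrow> (nat \<Rightarrow> real) \<Rightarrow> (nat \<Rightarrow> real) \<Rightarrow> real" where
  "mala_accept d h x y = min 1 (exp (f_pot d x - f_pot d y
      + (1 / (4 * h)) * (sqnorm d (\<lambda>i. y i - x i + h * x i)
                        - sqnorm d (\<lambda>i. x i - y i + h * y i))))"

definition mala_proposal :: "nat \<Rightarrow> real \<Rightarrow> (nat \<Rightarrow> real) \<Rightarrow> (nat \<Rightarrow> real) measure" where
  "mala_proposal d h x =
     distr (gauss d) (state_space d)
       (\<lambda>g. \<lambda>i\<in>{..<d}. x i - h * x i + sqrt (2 * h) * g i)"

definition mala_kernel :: "nat \<Rightarrow> real \<Rightarrow> (nat \<Rightarrow> real) \<Rightarrow> (nat \<Rightarrow> real) measure" where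
  "mala_kernel d h x =
     mala_proposal d h x \<bind>
       (\<lambda>y. distr (measure_pmf (bernoulli_pmf (mala_accept d h x y))) (state_space d)
               (\<lambda>b. if b then y else x))"

definition mala_law :: "nat \<Rightarrow> real \<Rightarrow> (nat \<Rightarrow> real) measure \<Rightarrow> nat \<Rightarrow> (nat \<Rightarrow> real) measure" where
  "mala_law d h \<mu> T = ((\<lambda>\<nu>. \<nu> \<bind> mala_kernel d h) ^^ T) \<mu>"

definition mala_init :: "nat \<Rightarrow> (nat \<Rightarrow> real) measure" where
  "mala_init d = uniform_measure (gauss d) {x \<in> space (gauss d). sqnorm d x \<le> real d / 2}"

definition tv_dist :: "nat \<Rightarrow> (nat \<Rightarrow> real) measure \<Rightarrow> (nat \<Rightarrow> real) measure \<Rightarrow> real" where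
  "tv_dist d \<mu> \<nu> = (SUP A\<in>sets (state_space d). \<bar>measure \<mu> A - measure \<nu> A\<bar>)"

end

theory Submission
  imports Defs "HOL-Real_Asymp.Real_Asymp"
begin

abbreviation NN :: "real measure" where "NN \<equiv> density lborel std_normal_density"

lemma prob_NN: "prob_space NN" by (rule prob_space_normal_density) simp

lemma nn_sq_affine:
  "(\<integral>\<^sup>+z. ennreal ((a + b * z)\<^sup>2) \<partial>NN) = ennreal (a\<^sup>2 + b\<^sup>2)"
proof -
  have eq: "\<And>z. std_normal_density z * (a + b * z)\<^sup>2 =
      a\<^sup>2 * (std_normal_density z * z^0) + (2*a*b) * (std_normal_density z * z^1) + b\<^sup>2 * (std_normal_density z * z^2)"
    by (simp add: power2_eq_square algebra_simps)
  have i0: "integrable lborel (\<lambda>z. std_normal_density z * z^k)" for k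
    by (rule integrable_std_normal_moment)
  have int: "integrable lborel (\<lambda>z. std_normal_density z * (a + b * z)\<^sup>2)"
    unfolding eq using i0[of 0] i0[of 1] i0[of 2] by auto
  have I0: "(\<integral>z. std_normal_density z * z^0 \<partial>lborel) = 1"
    using integral_std_normal_moment_even[of 0] by simp
  have I1: "(\<integral>z. std_normal_density z * z^1 \<partial>lborel) = 0"
    using integral_std_normal_moment_odd[of 0] by simp
  have I2: "(\<integral>z. std_normal_density z * z^2 \<partial>lborel) = 1"
    using integral_std_normal_moment_even[of 1] by simp
  have "(\<integral>z. std_normal_density z * (a + b * z)\<^sup>2 \<partial>lborel) = a\<^sup>2 + b\<^sup>2"
    unfolding eq using i0[of 0] i0[of 1] i0[of 2] I0 I1 I2 by simp
  then show ?thesis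
    by (simp add: nn_integral_density ennreal_mult'[symmetric] nn_integral_eq_integral[OF int])
qed

lemma nn_exp_sq:
  assumes t: "t \<ge> 0"
  shows "(\<integral>\<^sup>+z. ennreal (exp (- t * z\<^sup>2)) \<partial>NN) = ennreal (1 / sqrt (1 + 2*t))"
proof -
  define \<sigma> where "\<sigma> = 1 / sqrt (1 + 2*t)"
  have sp: "sqrt (1 + 2*t) > 0" using t by simp
  have \<sigma>p: "\<sigma> > 0" using sp by (simp add: \<sigma>_def)
  have s2: "\<sigma>\<^sup>2 = 1 / (1 + 2*t)" using t by (simp add: \<sigma>_def power_divide)
  have eq: "std_normal_density z * exp (- t * z\<^sup>2) = normal_density 0 \<sigma> z / sqrt (1 + 2*t)" for z
  proof -
    have "normal_density 0 \<sigma> z = 1 / sqrt (2 * pi / (1 + 2*t)) * exp (-z\<^sup>2 * (1 + 2*t) / 2)"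
      unfolding normal_density_def s2 using t by (simp add: field_simps)
    also have "sqrt (2 * pi / (1 + 2*t)) = sqrt (2*pi) / sqrt (1 + 2*t)"
      by (simp add: real_sqrt_divide)
    also have "exp (-z\<^sup>2 * (1 + 2*t) / 2) = exp (- z\<^sup>2 / 2) * exp (- t * z\<^sup>2)"
      by (simp add: exp_add[symmetric] field_simps)
    finally show ?thesis using sp
      by (simp add: std_normal_density_def field_simps)
  qed
  have "(\<integral>\<^sup>+z. ennreal (exp (- t * z\<^sup>2)) \<partial>NN)
      = (\<integral>\<^sup>+z. ennreal (normal_density 0 \<sigma> z / sqrt (1 + 2*t)) \<partial>lborel)"
    using eq by (simp add: nn_integral_density ennreal_mult'[symmetric])
  also have "\<dots> = ennreal (\<integral>z. normal_density 0 \<sigma> z / sqrt (1 + 2*t) \<partial>lborel)"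
    by (rule nn_integral_eq_integral) (use integrable_normal_density[OF \<sigma>p, of 0] sp in \<open>auto simp del: integrable_normal_density\<close>)
  also have "\<dots> = ennreal (1 / sqrt (1 + 2*t))" using integral_normal_density[OF \<sigma>p, of 0] by (simp del: integral_normal_density)
  finally show ?thesis .
qed

lemma sets_gauss: "sets (gauss d) = sets (state_space d)"
  unfolding gauss_def state_space_def by (intro sets_PiM_cong) auto

lemma space_gauss: "space (gauss d) = space (state_space d)"
  using sets_gauss by (rule sets_eq_imp_space_eq)

lemma prob_gauss: "prob_space (gauss d)"
  unfolding gauss_def by (intro prob_space_PiM) (simp add: prob_NN)

interpretation NNP: product_sigma_finite "\<lambda>_::nat. NN"
  unfolding product_sigma_finite_def using prob_space_imp_sigma_finite[OF prob_NN] by simp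

lemma gauss_prod:
  assumes "\<And>i. i < d \<Longrightarrow> f i \<in> borel_measurable borel"
  shows "(\<integral>\<^sup>+x. (\<Prod>i<d. f i (x i)) \<partial>gauss d) = (\<Prod>i<d. \<integral>\<^sup>+z. f i z \<partial>NN)"
  unfolding gauss_def
  by (rule NNP.product_nn_integral_prod) (use assms in auto)

lemma gauss_comp:
  assumes "i < d" and [measurable]: "F \<in> borel_measurable borel"
  shows "(\<integral>\<^sup>+x. F (x i) \<partial>gauss d) = (\<integral>\<^sup>+z. F z \<partial>NN)"
proof -
  have "distr (gauss d) NN (\<lambda>x. x i) = NN"
    unfolding gauss_def by (rule distr_PiM_component) (use assms prob_NN in auto)
  then have "(\<integral>\<^sup>+z. F z \<partial>NN) = (\<integral>\<^sup>+z. F z \<partial>distr (gauss d) NN (\<lambda>x. x i))" by simp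
  also have "\<dots> = (\<integral>\<^sup>+x. F (x i) \<partial>gauss d)"
    by (rule nn_integral_distr) (use assms in \<open>auto simp: gauss_def\<close>)
  finally show ?thesis by simp
qed

lemma sqnorm_meas[measurable]: "sqnorm d \<in> borel_measurable (state_space d)"
  unfolding sqnorm_def state_space_def by measurable

lemma chernoff:
  assumes t: "t \<ge> 0"
  shows "emeasure (gauss d) {x \<in> space (gauss d). sqnorm d x < a * d}
     \<le> ennreal (exp (t * a * d) * (1 / sqrt (1 + 2*t)) ^ d)"
proof -
  have m: "sqnorm d \<in> borel_measurable (gauss d)"
    using sqnorm_meas measurable_cong_sets[OF sets_gauss refl] by blast
  have "emeasure (gauss d) {x \<in> space (gauss d). sqnorm d x < a * d}
      = (\<integral>\<^sup>+x. indicator {x \<in> space (gauss d). sqnorm d x < a * d} x \<partial>gauss d)"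
    by (rule nn_integral_indicator[symmetric]) (use m in measurable)
  also have "\<dots> \<le> (\<integral>\<^sup>+x. ennreal (exp (t * a * d) * (\<Prod>i<d. exp (- t * (x i)\<^sup>2))) \<partial>gauss d)"
  proof (rule nn_integral_mono)
    fix x assume "x \<in> space (gauss d)"
    have "exp (t * a * d) * (\<Prod>i<d. exp (- t * (x i)\<^sup>2)) = exp (t * (a * d - sqnorm d x))"
      by (simp add: exp_sum[symmetric] exp_add[symmetric] sqnorm_def sum_distrib_left sum_negf algebra_simps)
    moreover have "sqnorm d x < a * d \<Longrightarrow> 1 \<le> exp (t * (a * d - sqnorm d x))"
      using t by simp
    ultimately show "indicator {x \<in> space (gauss d). sqnorm d x < a * d} x
        \<le> ennreal (exp (t * a * d) * (\<Prod>i<d. exp (- t * (x i)\<^sup>2)))"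
      by (auto simp: indicator_def)
  qed
  also have "\<dots> = ennreal (exp (t * a * d)) * (\<integral>\<^sup>+x. (\<Prod>i<d. ennreal (exp (- t * (x i)\<^sup>2))) \<partial>gauss d)"
    by (subst nn_integral_cmult[symmetric])
       (auto simp: ennreal_mult' prod_ennreal gauss_def intro!: nn_integral_cong)
  also have "\<dots> = ennreal (exp (t * a * d)) * (\<Prod>i<d. ennreal (1 / sqrt (1 + 2*t)))"
    by (subst gauss_prod) (use nn_exp_sq[OF t] in auto)
  also have "\<dots> = ennreal (exp (t * a * d) * (1 / sqrt (1 + 2*t)) ^ d)"
    using t by (simp add: ennreal_mult' ennreal_power)
  finally show ?thesis .
qed


lemma accept_eq:
  assumes h: "h \<noteq> 0"
  shows "mala_accept d h x y = min 1 (exp (h / 4 * (sqnorm d x - sqnorm d y)))"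
proof -
  have "sqnorm d (\<lambda>i. y i - x i + h * x i) - sqnorm d (\<lambda>i. x i - y i + h * y i)
      = (2*h - h\<^sup>2) * (sqnorm d y - sqnorm d x)"
    unfolding sqnorm_def sum_subtractf[symmetric] sum_distrib_left right_diff_distrib
    by (intro sum.cong) (auto simp: power2_eq_square algebra_simps)
  then have "f_pot d x - f_pot d y
      + (1 / (4 * h)) * (sqnorm d (\<lambda>i. y i - x i + h * x i) - sqnorm d (\<lambda>i. x i - y i + h * y i))
      = h / 4 * (sqnorm d x - sqnorm d y)"
    using h by (simp add: f_pot_def power2_eq_square field_simps)
  then show ?thesis unfolding mala_accept_def by (rule arg_cong[where f="\<lambda>z. min 1 (exp z)"])
qed

lemma accept_bounds: "0 \<le> mala_accept d h x y" "mala_accept d h x y \<le> 1"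
  unfolding mala_accept_def by auto

lemma accept_convex:
  assumes h: "h > 0"
  shows "mala_accept d h x y * sqnorm d y + (1 - mala_accept d h x y) * sqnorm d x \<le> sqnorm d y"
proof (cases "sqnorm d y \<le> sqnorm d x")
  case True
  then have "mala_accept d h x y = 1" using h by (simp add: accept_eq)
  then show ?thesis by simp
next
  case False
  have "(1 - mala_accept d h x y) * sqnorm d x \<le> (1 - mala_accept d h x y) * sqnorm d y"
    using False accept_bounds[of d h x y] by (intro mult_left_mono) auto
  then show ?thesis by (simp add: algebra_simps)
qed

definition Bk :: "nat \<Rightarrow> real \<Rightarrow> (nat \<Rightarrow> real) \<Rightarrow> (nat \<Rightarrow> real) \<Rightarrow> (nat \<Rightarrow> real) measure" where
  "Bk d h x y = distr (measure_pmf (bernoulli_pmf (mala_accept d h x y))) (state_space d)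
               (\<lambda>b. if b then y else x)"

lemma Bk_nn:
  assumes "x \<in> space (state_space d)" "y \<in> space (state_space d)"
    and f: "f \<in> borel_measurable (state_space d)"
  shows "(\<integral>\<^sup>+z. f z \<partial>Bk d h x y) = f y * ennreal (mala_accept d h x y) + f x * ennreal (1 - mala_accept d h x y)"
proof -
  have "(\<integral>\<^sup>+z. f z \<partial>Bk d h x y) = (\<integral>\<^sup>+b. f (if b then y else x) \<partial>measure_pmf (bernoulli_pmf (mala_accept d h x y)))"
    unfolding Bk_def by (rule nn_integral_distr) (use assms in auto)
  also have "\<dots> = f y * ennreal (mala_accept d h x y) + f x * ennreal (1 - mala_accept d h x y)"
    using accept_bounds[of d h x y] by simp
  finally show ?thesis .
qed

lemma Bk_sets: "sets (Bk d h x y) = sets (state_space d)"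
  unfolding Bk_def by simp

lemma Bk_prob:
  assumes "x \<in> space (state_space d)" "y \<in> space (state_space d)"
  shows "prob_space (Bk d h x y)"
  unfolding Bk_def by (rule prob_space.prob_space_distr) (use assms in \<open>auto simp: measure_pmf.prob_space_axioms\<close>)

lemma accept_meas[measurable]:
  "(\<lambda>p. mala_accept d h (fst p) (snd p)) \<in> borel_measurable (state_space d \<Otimes>\<^sub>M state_space d)"
  unfolding mala_accept_def f_pot_def sqnorm_def state_space_def by measurable

lemma Bk_meas:
  "(\<lambda>p. Bk d h (fst p) (snd p)) \<in> measurable (state_space d \<Otimes>\<^sub>M state_space d) (subprob_algebra (state_space d))"
proof (rule measurable_subprob_algebra)
  fix p assume p: "p \<in> space (state_space d \<Otimes>\<^sub>M state_space d)"
  then show "subprob_space (Bk d h (fst p) (snd p))"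
    by (intro prob_space_imp_subprob_space Bk_prob) (auto simp: space_pair_measure)
  show "sets (Bk d h (fst p) (snd p)) = sets (state_space d)" by (rule Bk_sets)
next
  fix A assume A: "A \<in> sets (state_space d)"
  have "(\<lambda>p. indicator A (snd p) * ennreal (mala_accept d h (fst p) (snd p))
            + indicator A (fst p) * ennreal (1 - mala_accept d h (fst p) (snd p)))
        \<in> borel_measurable (state_space d \<Otimes>\<^sub>M state_space d)"
    using A by measurable
  then show "(\<lambda>p. emeasure (Bk d h (fst p) (snd p)) A) \<in> borel_measurable (state_space d \<Otimes>\<^sub>M state_space d)"
  proof (rule measurable_cong[THEN iffD1, rotated])
    fix p assume p: "p \<in> space (state_space d \<Otimes>\<^sub>M state_space d)"
    have "emeasure (Bk d h (fst p) (snd p)) A = (\<integral>\<^sup>+z. indicator A z \<partial>Bk d h (fst p) (snd p))"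
      using A by (simp add: Bk_sets)
    also have "\<dots> = indicator A (snd p) * ennreal (mala_accept d h (fst p) (snd p))
            + indicator A (fst p) * ennreal (1 - mala_accept d h (fst p) (snd p))"
      by (rule Bk_nn) (use p A in \<open>auto simp: space_pair_measure\<close>)
    finally show "indicator A (snd p) * ennreal (mala_accept d h (fst p) (snd p))
            + indicator A (fst p) * ennreal (1 - mala_accept d h (fst p) (snd p))
          = emeasure (Bk d h (fst p) (snd p)) A" by simp
  qed
qed


lemma prop_fun_meas[measurable]:
  "(\<lambda>(x, g). \<lambda>i\<in>{..<d}. x i - h * x i + sqrt (2 * h) * g i)
     \<in> measurable (state_space d \<Otimes>\<^sub>M gauss d) (state_space d)"
proof -
  have "(\<lambda>(x, g). \<lambda>i\<in>{..<d}. x i - h * x i + sqrt (2 * h) * g i)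
     \<in> measurable (state_space d \<Otimes>\<^sub>M state_space d) (state_space d)"
    unfolding state_space_def by measurable
  then show ?thesis
    by (subst measurable_cong_sets[OF sets_pair_measure_cong[OF refl sets_gauss] refl])
qed

lemma prop_meas:
  "mala_proposal d h \<in> measurable (state_space d) (subprob_algebra (state_space d))"
proof -
  have g: "(\<lambda>x. gauss d) \<in> measurable (state_space d) (subprob_algebra (gauss d))"
    by (rule measurable_const)
       (simp add: space_subprob_algebra prob_space_imp_subprob_space prob_gauss)
  have "(\<lambda>x. distr (gauss d) (state_space d) (\<lambda>g. \<lambda>i\<in>{..<d}. x i - h * x i + sqrt (2 * h) * g i))
      \<in> measurable (state_space d) (subprob_algebra (state_space d))"
    by (rule measurable_distr2[OF _ g]) (use prop_fun_meas in simp)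
  then show ?thesis unfolding mala_proposal_def[abs_def] .
qed

lemma prop_sets: "sets (mala_proposal d h x) = sets (state_space d)"
  unfolding mala_proposal_def by simp

lemma prop_nn_sq:
  assumes h: "h \<ge> 0"
  shows "(\<integral>\<^sup>+y. ennreal (sqnorm d y) \<partial>mala_proposal d h x)
      = ennreal ((1 - h)\<^sup>2 * sqnorm d x + 2 * h * d)"
proof -
  have fm: "(\<lambda>g. \<lambda>i\<in>{..<d}. x i - h * x i + sqrt (2 * h) * g i) \<in> measurable (gauss d) (state_space d)"
    unfolding state_space_def gauss_def by measurable
  have sm: "(\<lambda>y. ennreal (sqnorm d y)) \<in> borel_measurable (state_space d)" by measurable
  have "(\<integral>\<^sup>+y. ennreal (sqnorm d y) \<partial>mala_proposal d h x)
      = (\<integral>\<^sup>+g. ennreal (sqnorm d (\<lambda>i\<in>{..<d}. x i - h * x i + sqrt (2 * h) * g i)) \<partial>gauss d)"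
    unfolding mala_proposal_def by (rule nn_integral_distr[OF fm]) simp
  also have "\<dots> = (\<integral>\<^sup>+g. (\<Sum>i<d. ennreal (((1 - h) * x i + sqrt (2 * h) * g i)\<^sup>2)) \<partial>gauss d)"
    by (intro nn_integral_cong) (simp add: sqnorm_def algebra_simps)
  also have "\<dots> = (\<Sum>i<d. \<integral>\<^sup>+g. ennreal (((1 - h) * x i + sqrt (2 * h) * g i)\<^sup>2) \<partial>gauss d)"
    by (rule nn_integral_sum) (simp add: gauss_def)
  also have "\<dots> = (\<Sum>i<d. ennreal (((1 - h) * x i)\<^sup>2 + (sqrt (2 * h))\<^sup>2))"
  proof (rule sum.cong[OF refl])
    fix i assume i: "i \<in> {..<d}"
    have "(\<integral>\<^sup>+g. ennreal (((1 - h) * x i + sqrt (2 * h) * g i)\<^sup>2) \<partial>gauss d)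
        = (\<integral>\<^sup>+z. ennreal (((1 - h) * x i + sqrt (2 * h) * z)\<^sup>2) \<partial>NN)"
      by (rule gauss_comp[where F="\<lambda>z. ennreal (((1 - h) * x i + sqrt (2 * h) * z)\<^sup>2)"]) (use i in auto)
    also have "\<dots> = ennreal (((1 - h) * x i)\<^sup>2 + (sqrt (2 * h))\<^sup>2)" by (rule nn_sq_affine)
    finally show "(\<integral>\<^sup>+g. ennreal (((1 - h) * x i + sqrt (2 * h) * g i)\<^sup>2) \<partial>gauss d)
        = ennreal (((1 - h) * x i)\<^sup>2 + (sqrt (2 * h))\<^sup>2)" .
  qed
  also have "\<dots> = ennreal (\<Sum>i<d. ((1 - h) * x i)\<^sup>2 + (sqrt (2 * h))\<^sup>2)"
    by (rule sum_ennreal) simp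
  also have "(\<Sum>i<d. ((1 - h) * x i)\<^sup>2 + (sqrt (2 * h))\<^sup>2) = (1 - h)\<^sup>2 * sqnorm d x + 2 * h * d"
    using h by (simp add: sum.distrib sqnorm_def sum_distrib_left power_mult_distrib)
  finally show ?thesis .
qed


lemma kernel_eq: "mala_kernel d h x = mala_proposal d h x \<bind> Bk d h x"
  unfolding mala_kernel_def Bk_def ..

lemma Bk_meas2: "Bk d h x \<in> measurable (state_space d) (subprob_algebra (state_space d))"
  if "x \<in> space (state_space d)" for x
  using measurable_Pair_compose_split[OF Bk_meas[unfolded split_beta'[symmetric]] measurable_const[OF that] measurable_ident]
  by simp

lemma Bk_meas3: "Bk d h x \<in> measurable (mala_proposal d h x) (subprob_algebra (state_space d))"
  if "x \<in> space (state_space d)" for x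
  by (subst measurable_cong_sets[OF prop_sets refl]) (rule Bk_meas2[OF that])

lemma kernel_meas: "mala_kernel d h \<in> measurable (state_space d) (subprob_algebra (state_space d))"
proof -
  have "(\<lambda>x. mala_proposal d h x \<bind> Bk d h x) \<in> measurable (state_space d) (subprob_algebra (state_space d))"
    by (rule measurable_bind'[OF prop_meas]) (use Bk_meas in \<open>simp add: split_beta'\<close>)
  then show ?thesis unfolding kernel_eq[abs_def] .
qed

lemma space_ss_ne: "space (state_space d) \<noteq> {}"
  unfolding state_space_def by (simp add: space_PiM PiE_eq_empty_iff)

lemma kernel_sets: "x \<in> space (state_space d) \<Longrightarrow> sets (mala_kernel d h x) = sets (state_space d)"
  by (rule sets_kernel[OF kernel_meas])

lemma space_prop: "space (mala_proposal d h x) = space (state_space d)"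
  by (rule sets_eq_imp_space_eq[OF prop_sets])

lemma kernel_mass:
  assumes x: "x \<in> space (state_space d)"
  shows "emeasure (mala_kernel d h x) (space (state_space d)) = 1"
proof -
  have pn: "space (mala_proposal d h x) \<noteq> {}" using space_ss_ne space_prop by simp
  have "emeasure (mala_kernel d h x) (space (state_space d))
      = (\<integral>\<^sup>+y. emeasure (Bk d h x y) (space (state_space d)) \<partial>mala_proposal d h x)"
    unfolding kernel_eq
    by (rule emeasure_bind[OF pn Bk_meas3[OF x]]) simp
  also have "\<dots> = (\<integral>\<^sup>+y. 1 \<partial>mala_proposal d h x)"
  proof (rule nn_integral_cong)
    fix y assume "y \<in> space (mala_proposal d h x)"
    then have y: "y \<in> space (state_space d)" by (simp add: space_prop)
    interpret prob_space "Bk d h x y" by (rule Bk_prob[OF x y])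
    show "emeasure (Bk d h x y) (space (state_space d)) = 1"
      using emeasure_space_1 sets_eq_imp_space_eq[OF Bk_sets] by simp
  qed
  also have "\<dots> = 1"
  proof -
    interpret prob_space "mala_proposal d h x"
      unfolding mala_proposal_def
      by (rule prob_space.prob_space_distr[OF prob_gauss]) (use prop_fun_meas in \<open>simp add: state_space_def gauss_def\<close>)
    show ?thesis using emeasure_space_1 by simp
  qed
  finally show ?thesis .
qed

lemma kernel_nn_sq:
  assumes x: "x \<in> space (state_space d)" and h: "0 < h" "h \<le> 2"
  shows "(\<integral>\<^sup>+y. ennreal (sqnorm d y) \<partial>mala_kernel d h x) \<le> ennreal (sqnorm d x + 2 * h * d)"
proof -
  have "(\<integral>\<^sup>+y. ennreal (sqnorm d y) \<partial>mala_kernel d h x)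
      = (\<integral>\<^sup>+y. \<integral>\<^sup>+z. ennreal (sqnorm d z) \<partial>Bk d h x y \<partial>mala_proposal d h x)"
    unfolding kernel_eq
    by (rule nn_integral_bind[OF _ Bk_meas3[OF x]]) simp
  also have "\<dots> \<le> (\<integral>\<^sup>+y. ennreal (sqnorm d y) \<partial>mala_proposal d h x)"
  proof (rule nn_integral_mono)
    fix y assume "y \<in> space (mala_proposal d h x)"
    then have y: "y \<in> space (state_space d)" by (simp add: space_prop)
    have "(\<integral>\<^sup>+z. ennreal (sqnorm d z) \<partial>Bk d h x y)
        = ennreal (sqnorm d y) * ennreal (mala_accept d h x y) + ennreal (sqnorm d x) * ennreal (1 - mala_accept d h x y)"
      by (rule Bk_nn[OF x y]) simp
    also have "\<dots> = ennreal (mala_accept d h x y * sqnorm d y + (1 - mala_accept d h x y) * sqnorm d x)"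
      using accept_bounds[of d h x y]
      by (simp add: ennreal_mult'[symmetric] ennreal_plus[symmetric] sqnorm_def sum_nonneg mult.commute del: ennreal_plus)
    also have "\<dots> \<le> ennreal (sqnorm d y)"
      using accept_convex[OF h(1)] by (rule ennreal_leI)
    finally show "(\<integral>\<^sup>+z. ennreal (sqnorm d z) \<partial>Bk d h x y) \<le> ennreal (sqnorm d y)" .
  qed
  also have "\<dots> = ennreal ((1 - h)\<^sup>2 * sqnorm d x + 2 * h * d)"
    using h by (intro prop_nn_sq) simp
  also have "\<dots> \<le> ennreal (sqnorm d x + 2 * h * d)"
  proof (rule ennreal_leI)
    have e: "(1 - h)\<^sup>2 = 1 - h * (2 - h)" by (simp add: power2_eq_square algebra_simps)
    have "0 \<le> h * (2 - h)" using h by simp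
    then have "(1 - h)\<^sup>2 \<le> 1" unfolding e by simp
    moreover have "0 \<le> sqnorm d x" by (simp add: sqnorm_def sum_nonneg)
    ultimately show "(1 - h)\<^sup>2 * sqnorm d x + 2 * h * d \<le> sqnorm d x + 2 * h * d"
      by (simp add: mult_left_le_one_le)
  qed
  finally show ?thesis .
qed


lemma step:
  assumes s: "sets \<nu> = sets (state_space d)" and h: "0 < h" "h \<le> 2"
  shows "sets (\<nu> \<bind> mala_kernel d h) = sets (state_space d)"
    and "emeasure (\<nu> \<bind> mala_kernel d h) (space (state_space d)) = emeasure \<nu> (space (state_space d))"
    and "(\<integral>\<^sup>+y. ennreal (sqnorm d y) \<partial>(\<nu> \<bind> mala_kernel d h))
          \<le> (\<integral>\<^sup>+y. ennreal (sqnorm d y) \<partial>\<nu>) + ennreal (2 * h * d) * emeasure \<nu> (space (state_space d))"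
proof -
  have sp: "space \<nu> = space (state_space d)" by (rule sets_eq_imp_space_eq[OF s])
  have ne: "space \<nu> \<noteq> {}" using sp space_ss_ne by simp
  have km: "mala_kernel d h \<in> measurable \<nu> (subprob_algebra (state_space d))"
    by (subst measurable_cong_sets[OF s refl]) (rule kernel_meas)
  show "sets (\<nu> \<bind> mala_kernel d h) = sets (state_space d)"
    by (rule sets_bind_measurable[OF km ne])
  have "emeasure (\<nu> \<bind> mala_kernel d h) (space (state_space d))
      = (\<integral>\<^sup>+x. emeasure (mala_kernel d h x) (space (state_space d)) \<partial>\<nu>)"
    by (rule emeasure_bind[OF ne km]) simp
  also have "\<dots> = (\<integral>\<^sup>+x. 1 \<partial>\<nu>)"
    by (rule nn_integral_cong) (simp add: sp kernel_mass)
  also have "\<dots> = emeasure \<nu> (space (state_space d))" by (simp add: sp)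
  finally show "emeasure (\<nu> \<bind> mala_kernel d h) (space (state_space d)) = emeasure \<nu> (space (state_space d))" .
  have "(\<integral>\<^sup>+y. ennreal (sqnorm d y) \<partial>(\<nu> \<bind> mala_kernel d h))
      = (\<integral>\<^sup>+x. \<integral>\<^sup>+y. ennreal (sqnorm d y) \<partial>mala_kernel d h x \<partial>\<nu>)"
    by (rule nn_integral_bind[OF _ km]) simp
  also have "\<dots> \<le> (\<integral>\<^sup>+x. ennreal (sqnorm d x) + ennreal (2 * h * d) \<partial>\<nu>)"
  proof (rule nn_integral_mono)
    fix x assume "x \<in> space \<nu>"
    then have x: "x \<in> space (state_space d)" by (simp add: sp)
    have "0 \<le> sqnorm d x" by (simp add: sqnorm_def sum_nonneg)
    then show "(\<integral>\<^sup>+y. ennreal (sqnorm d y) \<partial>mala_kernel d h x) \<le> ennreal (sqnorm d x) + ennreal (2 * h * d)"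
      using kernel_nn_sq[OF x h] h by (simp add: ennreal_plus[symmetric] del: ennreal_plus)
  qed
  also have "\<dots> = (\<integral>\<^sup>+y. ennreal (sqnorm d y) \<partial>\<nu>) + ennreal (2 * h * d) * emeasure \<nu> (space (state_space d))"
  proof -
    have m: "(\<lambda>y. ennreal (sqnorm d y)) \<in> borel_measurable \<nu>"
      by (subst measurable_cong_sets[OF s refl]) simp
    show ?thesis
      by (subst nn_integral_add) (use m in \<open>auto simp: sp\<close>)
  qed
  finally show "(\<integral>\<^sup>+y. ennreal (sqnorm d y) \<partial>(\<nu> \<bind> mala_kernel d h))
          \<le> (\<integral>\<^sup>+y. ennreal (sqnorm d y) \<partial>\<nu>) + ennreal (2 * h * d) * emeasure \<nu> (space (state_space d))" .
qed

lemma chain: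
  assumes s: "sets \<mu> = sets (state_space d)" and h: "0 < h" "h \<le> 2"
  shows "sets (mala_law d h \<mu> T) = sets (state_space d)
    \<and> emeasure (mala_law d h \<mu> T) (space (state_space d)) = emeasure \<mu> (space (state_space d))
    \<and> (\<integral>\<^sup>+y. ennreal (sqnorm d y) \<partial>mala_law d h \<mu> T)
          \<le> (\<integral>\<^sup>+y. ennreal (sqnorm d y) \<partial>\<mu>) + ennreal (2 * h * d * T) * emeasure \<mu> (space (state_space d))"
proof (induction T)
  case 0
  then show ?case using s by (simp add: mala_law_def)
next
  case (Suc T)
  let ?\<nu> = "mala_law d h \<mu> T"
  have eq: "mala_law d h \<mu> (Suc T) = ?\<nu> \<bind> mala_kernel d h"
    by (simp add: mala_law_def)
  have s1: "sets ?\<nu> = sets (state_space d)" using Suc by simp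
  note st = step[OF s1 h]
  have "(\<integral>\<^sup>+y. ennreal (sqnorm d y) \<partial>mala_law d h \<mu> (Suc T))
      \<le> (\<integral>\<^sup>+y. ennreal (sqnorm d y) \<partial>?\<nu>) + ennreal (2 * h * d) * emeasure \<mu> (space (state_space d))"
    using st(3) Suc by (simp add: eq)
  also have "\<dots> \<le> (\<integral>\<^sup>+y. ennreal (sqnorm d y) \<partial>\<mu>) + ennreal (2 * h * d * T) * emeasure \<mu> (space (state_space d))
       + ennreal (2 * h * d) * emeasure \<mu> (space (state_space d))"
    using Suc by (intro add_right_mono) simp
  also have "\<dots> = (\<integral>\<^sup>+y. ennreal (sqnorm d y) \<partial>\<mu>) + ennreal (2 * h * d * Suc T) * emeasure \<mu> (space (state_space d))"
  proof -
    have e1: "2 * h * d * Suc T = 2 * h * d * T + 2 * h * d" by (simp add: algebra_simps)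
    have "ennreal (2 * h * d * Suc T) = ennreal (2 * h * d * T) + ennreal (2 * h * d)"
      unfolding e1 using h by (intro ennreal_plus) auto
    then show ?thesis by (simp add: add.assoc distrib_right)
  qed
  finally show ?case using st(1,2) Suc by (simp add: eq)
qed


lemma sqnorm_nonneg: "0 \<le> sqnorm d x" by (simp add: sqnorm_def sum_nonneg)

lemma init_facts:
  shows "sets (mala_init d) = sets (state_space d)"
    and "emeasure (mala_init d) (space (state_space d)) = 0 \<or> emeasure (mala_init d) (space (state_space d)) = 1"
    and "(\<integral>\<^sup>+y. ennreal (sqnorm d y) \<partial>mala_init d) \<le> ennreal (d / 2) * emeasure (mala_init d) (space (state_space d))"
proof -
  define A0 where "A0 = {x \<in> space (gauss d). sqnorm d x \<le> real d / 2}"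
  have mg: "sqnorm d \<in> borel_measurable (gauss d)"
    using sqnorm_meas measurable_cong_sets[OF sets_gauss refl] by blast
  have A0: "A0 \<in> sets (gauss d)" unfolding A0_def using mg by measurable
  have ui: "mala_init d = uniform_measure (gauss d) A0" unfolding mala_init_def A0_def ..
  show s: "sets (mala_init d) = sets (state_space d)" by (simp add: ui sets_gauss)
  define E where "E = emeasure (gauss d) A0"
  have Efin: "E \<noteq> \<infinity>" unfolding E_def
    using prob_space.emeasure_le_1[OF prob_gauss, of d A0] by (auto simp: top_unique)
  have sp: "space (state_space d) \<in> sets (gauss d)" by (simp add: sets_gauss)
  have A0sub: "A0 \<subseteq> space (state_space d)" using A0_def space_gauss by auto
  have p: "emeasure (mala_init d) (space (state_space d)) = E / E"
    unfolding ui E_def using A0sub by (subst emeasure_uniform_measure[OF A0 sp]) (simp add: Int_absorb2)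
  show "emeasure (mala_init d) (space (state_space d)) = 0 \<or> emeasure (mala_init d) (space (state_space d)) = 1"
    unfolding p using Efin by (cases "E = 0") (auto simp: top.not_eq_extremum)
  have "(\<integral>\<^sup>+y. ennreal (sqnorm d y) \<partial>mala_init d) = (\<integral>\<^sup>+y. ennreal (sqnorm d y) * indicator A0 y \<partial>gauss d) / E"
    unfolding ui E_def by (rule nn_integral_uniform_measure[OF _ A0]) (use mg in measurable)
  also have "\<dots> \<le> (\<integral>\<^sup>+y. ennreal (d / 2) * indicator A0 y \<partial>gauss d) / E"
    by (intro divide_right_mono_ennreal nn_integral_mono) (auto simp: indicator_def A0_def)
  also have "\<dots> = ennreal (d / 2) * (E / E)"
    using A0 by (simp add: E_def nn_integral_cmult_indicator ennreal_times_divide)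
  finally show "(\<integral>\<^sup>+y. ennreal (sqnorm d y) \<partial>mala_init d) \<le> ennreal (d / 2) * emeasure (mala_init d) (space (state_space d))"
    by (simp add: p)
qed


lemma exp_m1_lt: "exp (-1::real) < 41 / 100"
proof -
  have "exp 1 > (1 + 1/4) powr (4::real)" by (rule exp_1_gt_powr) simp
  moreover have "(1 + 1/4) powr (4::real) = (5/4)^4" by (simp add: powr_realpow)
  moreover have "(5/4::real)^4 = 625/256" by (simp add: power_divide)
  ultimately have "exp 1 > (625/256::real)" by simp
  then show ?thesis by (simp add: exp_minus field_simps)
qed

lemma tv_core:
  assumes h: "0 < h" "h \<le> 2" and hT: "2 * h * d * T \<le> d / 2000"
    and ch: "exp (1/20 * (22/25) * d) * (1 / sqrt (1 + 2 * (1/20))) ^ d \<le> 1/100"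
  shows "tv_dist d (mala_law d h (mala_init d) T) (gauss d) > exp (-1)"
proof -
  define \<pi> where "\<pi> = mala_law d h (mala_init d) T"
  define p where "p = emeasure (mala_init d) (space (state_space d))"
  note I = init_facts[of d]
  note Ch = chain[OF I(1) h, of T, folded \<pi>_def p_def]
  have s\<pi>: "sets \<pi> = sets (state_space d)" and m\<pi>: "emeasure \<pi> (space (state_space d)) = p"
    using Ch by auto
  have sp\<pi>: "space \<pi> = space (state_space d)" by (rule sets_eq_imp_space_eq[OF s\<pi>])
  have int\<pi>: "(\<integral>\<^sup>+y. ennreal (sqnorm d y) \<partial>\<pi>) \<le> ennreal (d/2) * p + ennreal (2 * h * d * T) * p"
    using Ch I(3) p_def by (meson add_right_mono order_trans)
  have p01: "p = 0 \<or> p = 1" using I(2) p_def by simp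
  interpret G: prob_space "gauss d" by (rule prob_gauss)
  have fin: "finite_measure \<pi>"
    by (rule finite_measureI) (use m\<pi> p01 sp\<pi> in \<open>auto simp del: space_bind\<close>)
  have bdd: "bdd_above ((\<lambda>A. \<bar>measure \<pi> A - measure (gauss d) A\<bar>) ` sets (state_space d))"
  proof (rule bdd_aboveI[where M="measure \<pi> (space \<pi>) + 1"])
    fix r assume "r \<in> (\<lambda>A. \<bar>measure \<pi> A - measure (gauss d) A\<bar>) ` sets (state_space d)"
    then obtain A where A: "A \<in> sets (state_space d)" and r: "r = \<bar>measure \<pi> A - measure (gauss d) A\<bar>" by auto
    have "measure \<pi> A \<le> measure \<pi> (space \<pi>)"
      using A s\<pi> by (intro finite_measure.bounded_measure[OF fin])
    moreover have "measure (gauss d) A \<le> 1" by (rule G.prob_le_1)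
    ultimately show "r \<le> measure \<pi> (space \<pi>) + 1" unfolding r
      using measure_nonneg[of \<pi> A] measure_nonneg[of "gauss d" A] unfolding abs_le_iff by linarith
  qed
  have key: "\<exists>A \<in> sets (state_space d). \<bar>measure \<pi> A - measure (gauss d) A\<bar> > exp (-1)"
  proof (cases "p = 0")
    case True
    have "measure \<pi> (space (state_space d)) = 0" using m\<pi> True by (simp add: measure_def)
    moreover have "measure (gauss d) (space (state_space d)) = 1"
      using G.prob_space space_gauss by simp
    ultimately show ?thesis using exp_m1_lt
      by (intro bexI[of _ "space (state_space d)"]) auto
  next
    case False
    then have p1: "p = 1" using p01 by simp
    interpret P: prob_space \<pi> by (rule prob_spaceI) (use m\<pi> p1 sp\<pi> in simp)
    define a :: real where "a = 22/25"
    define A where "A = {x \<in> space (state_space d). sqnorm d x < a * d}"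
    define Ac where "Ac = {x \<in> space (state_space d). a * d \<le> sqnorm d x}"
    have A: "A \<in> sets (state_space d)" unfolding A_def by measurable
    have Ac: "Ac \<in> sets (state_space d)" unfolding Ac_def by measurable
    have AcA: "Ac = space \<pi> - A" unfolding A_def Ac_def sp\<pi> by auto
    have "ennreal (a * d) * emeasure \<pi> Ac = (\<integral>\<^sup>+y. ennreal (a * d) * indicator Ac y \<partial>\<pi>)"
      using Ac s\<pi> by (simp add: nn_integral_cmult_indicator)
    also have "\<dots> \<le> (\<integral>\<^sup>+y. ennreal (sqnorm d y) \<partial>\<pi>)"
      by (intro nn_integral_mono) (auto simp: Ac_def indicator_def intro!: ennreal_leI)
    also have "\<dots> \<le> ennreal (d/2) + ennreal (2 * h * d * T)" using int\<pi> p1 by simp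
    also have "\<dots> = ennreal (d/2 + 2 * h * d * T)" using h by (simp add: ennreal_plus)
    finally have "ennreal (a * d * P.prob Ac) \<le> ennreal (d/2 + 2 * h * d * T)"
      by (simp add: P.emeasure_eq_measure ennreal_mult'[symmetric] mult.assoc a_def)
    then have mk: "a * d * P.prob Ac \<le> d/2 + 2 * h * d * T"
      using h by (subst (asm) ennreal_le_iff) auto
    have dpos: "d > 0"
    proof (rule ccontr)
      assume "\<not> d > 0" then have "d = 0" by simp
      then show False using ch by simp
    qed
    have "a * d * P.prob Ac \<le> d * (1/2 + 1/2000)" using mk hT by (simp add: algebra_simps)
    then have "P.prob Ac \<le> (1/2 + 1/2000) / a" using dpos
      by (simp add: a_def field_simps)
    then have PA: "P.prob A \<ge> 1 - (1/2 + 1/2000) / a"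
      using P.prob_compl[of A] A s\<pi> AcA by simp
    have "emeasure (gauss d) {x \<in> space (gauss d). sqnorm d x < a * d}
          \<le> ennreal (exp (1/20 * a * d) * (1 / sqrt (1 + 2 * (1/20))) ^ d)"
      by (rule chernoff) simp
    also have "\<dots> \<le> ennreal (1/100)" using ch by (intro ennreal_leI) (simp add: a_def)
    finally have "G.prob A \<le> 1/100"
      unfolding A_def space_gauss[symmetric] by (simp add: G.emeasure_eq_measure)
    then have "P.prob A - G.prob A > exp (-1)"
      using PA exp_m1_lt unfolding a_def by simp
    then show ?thesis using A by (intro bexI[of _ A]) auto
  qed
  then obtain A where A: "A \<in> sets (state_space d)" and gt: "\<bar>measure \<pi> A - measure (gauss d) A\<bar> > exp (-1)" by blast
  have "\<bar>measure \<pi> A - measure (gauss d) A\<bar> \<le> tv_dist d \<pi> (gauss d)"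
    unfolding tv_dist_def by (rule cSUP_upper[OF A bdd])
  then show ?thesis using gt unfolding \<pi>_def by simp
qed


lemma q_lt1: "exp (11/250::real) / sqrt (11/10) < 1"
proof -
  have "(1/10::real) - (1/10)\<^sup>2 \<le> ln (1 + 1/10)" by (rule ln_one_plus_pos_lower_bound) auto
  moreover have "(1/10::real) - (1/10)\<^sup>2 = 9/100" by (simp add: power2_eq_square)
  ultimately have "22/250 < ln (11/10::real)" by simp
  then have "exp (22/250::real) < 11/10" by (subst ln_less_cancel_iff[symmetric]) auto
  moreover have "exp (22/250::real) = (exp (11/250))\<^sup>2" by (simp add: exp_double[symmetric])
  ultimately have "(exp (11/250::real))\<^sup>2 < 11/10" by simp
  then have "exp (11/250::real) < sqrt (11/10)" by (simp add: real_less_rsqrt)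
  then show ?thesis by simp
qed

lemma ev_ch: "eventually (\<lambda>d::nat. exp (1/20 * (22/25) * real d) * (1 / sqrt (1 + 2 * (1/20))) ^ d \<le> 1/100) sequentially"
proof -
  define q :: real where "q = exp (11/250) / sqrt (11/10)"
  have q: "0 \<le> q" "q < 1" using q_lt1 by (auto simp: q_def)
  have "(\<lambda>n. q ^ n) \<longlonglongrightarrow> 0" using q by (intro LIMSEQ_power_zero) simp
  then have "eventually (\<lambda>n. q ^ n < 1/100) sequentially" by (rule order_tendstoD) simp
  moreover have "exp (1/20 * (22/25) * real d) * (1 / sqrt (1 + 2 * (1/20))) ^ d = q ^ d" for d
  proof -
    have "exp (1/20 * (22/25) * real d) = exp (11/250) ^ d" by (simp add: exp_of_nat2_mult[symmetric] mult.commute)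
    then show ?thesis by (simp add: q_def power_divide[symmetric] power_mult_distrib[symmetric])
  qed
  ultimately show ?thesis by (auto elim: eventually_mono)
qed

lemma ev_h: assumes "C > 0" shows "eventually (\<lambda>d::nat. C * ln (real d) / real d \<le> 2) sequentially"
proof -
  have "(\<lambda>n::nat. ln (real n) / real n) \<longlonglongrightarrow> 0" by real_asymp
  then have "eventually (\<lambda>n::nat. ln (real n) / real n < 2 / C) sequentially"
    by (rule order_tendstoD) (use assms in simp)
  then show ?thesis
    by (rule eventually_mono) (use assms in \<open>auto simp: field_simps\<close>)
qed

lemma ev_ln: "eventually (\<lambda>d::nat. 1 \<le> ln (real d)) sequentially"
proof -
  have "eventually (\<lambda>d::nat. 3 \<le> d) sequentially" by (rule eventually_ge_at_top)
  then show ?thesis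
  proof (rule eventually_mono)
    fix d :: nat assume "3 \<le> d"
    then have "exp 1 \<le> real d" using exp_le by linarith
    then have "ln (exp 1) \<le> ln (real d)" using \<open>3 \<le> d\<close> by (subst ln_le_cancel_iff) auto
    then show "1 \<le> ln (real d)" by simp
  qed
qed


theorem proposition3:
  fixes C :: real
  assumes "C > 0"
  shows "\<exists>c::real. c > 0 \<and> (\<exists>d0::nat. \<forall>d\<ge>d0. \<forall>\<kappa>::real. \<kappa> \<ge> 1 \<longrightarrow>
           (\<forall>h::real. 0 < h \<and> h \<le> C * ln (real d) / (\<kappa> * real d) \<longrightarrow>
             (\<forall>T::nat. real T \<le> c * \<kappa> * real d / (ln (real d))\<^sup>2 \<longrightarrow>
                tv_dist d (mala_law d h (mala_init d) T) (gauss d) > exp (-1))))"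
proof -
  define c where "c = 1 / (4000 * C)"
  have cpos: "c > 0" using assms by (simp add: c_def)
  have "eventually (\<lambda>d::nat. 1 \<le> ln (real d) \<and> C * ln (real d) / real d \<le> 2 \<and>
      exp (1/20 * (22/25) * real d) * (1 / sqrt (1 + 2 * (1/20))) ^ d \<le> 1/100) sequentially"
    using ev_ln ev_h[OF assms] ev_ch by (auto elim: eventually_elim2 eventually_mono intro: eventually_conj)
  then obtain N where N: "\<And>d. d \<ge> N \<Longrightarrow> 1 \<le> ln (real d) \<and> C * ln (real d) / real d \<le> 2 \<and>
      exp (1/20 * (22/25) * real d) * (1 / sqrt (1 + 2 * (1/20))) ^ d \<le> 1/100"
    unfolding eventually_sequentially by blast
  have main: "\<forall>d\<ge>N. \<forall>\<kappa>::real. \<kappa> \<ge> 1 \<longrightarrow>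
           (\<forall>h::real. 0 < h \<and> h \<le> C * ln (real d) / (\<kappa> * real d) \<longrightarrow>
             (\<forall>T::nat. real T \<le> c * \<kappa> * real d / (ln (real d))\<^sup>2 \<longrightarrow>
                tv_dist d (mala_law d h (mala_init d) T) (gauss d) > exp (-1)))"
  proof (intro allI impI, elim conjE)
    fix d :: nat and \<kappa> h :: real and T :: nat
    assume d: "N \<le> d" and \<kappa>: "1 \<le> \<kappa>" and h0: "0 < h" and h1: "h \<le> C * ln (real d) / (\<kappa> * real d)"
      and T: "real T \<le> c * \<kappa> * real d / (ln (real d))\<^sup>2"
    note Nd = N[OF d]
    have ln1: "1 \<le> ln (real d)" using Nd by simp
    have dpos: "real d > 0" using ln1 by (cases "d = 0") auto
    have lnpos: "ln (real d) > 0" using ln1 by simp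
    have "C * ln (real d) / (\<kappa> * real d) \<le> C * ln (real d) / real d"
      using \<kappa> dpos lnpos assms by (intro divide_left_mono) (auto intro: mult_pos_pos)
    then have h2: "h \<le> 2" using h1 Nd by linarith
    have "h * real T \<le> (C * ln (real d) / (\<kappa> * real d)) * (c * \<kappa> * real d / (ln (real d))\<^sup>2)"
      using h1 T h0 by (intro mult_mono) auto
    also have "\<dots> = 1 / (4000 * ln (real d))"
      using assms \<kappa> dpos lnpos by (simp add: c_def power2_eq_square field_simps)
    also have "\<dots> \<le> 1 / 4000" using ln1 by (simp add: field_simps)
    finally have hT: "h * real T \<le> 1 / 4000" .
    have "2 * h * real d * real T \<le> real d / 2000"
      using mult_left_mono[OF hT, of "2 * real d"] dpos by (simp add: algebra_simps)
    then show "tv_dist d (mala_law d h (mala_init d) T) (gauss d) > exp (-1)"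
      using tv_core[OF h0 h2] Nd by simp
  qed
  show ?thesis using cpos main by blast
qed

end
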